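(* The intruder model $(\Sigma_{\mathrm{enc}},\vdash)$ is absorbing: for all lists $\vec x=x_1,\dots,x_n$ and $\vec y=y_1,\dots,y_n$ of pairwise distinct names, every finite set of messages $\Gamma$ with $\mathrm{names}(\Gamma)\cap\{y_1,\dots,y_n\}=\emptyset$, and $\Gamma'=\Gamma\{x_1\mapsto y_1,\dots,x_n\mapsto y_n\}$, and every message $M$ with $\mathrm{names}(M)\subseteq\mathrm{names}(\Gamma)$, we have $\Gamma\cup\Gamma'\vdash M$ if and only if $\Gamma\vdash M$.
   Context: Fix a countably infinite set of names. $\Sigma_{\mathrm{enc}}$ consists of the binary constructors $(\cdot,\cdot)$ (pairing), $\{\cdot\}_{\cdot}$ (symmetric encryption), $\mathrm{aenc}(\cdot,\cdot)$ and the unary constructor $\mathrm{pub}(\cdot)$; messages are terms over names and these constructors; $\mathrm{names}(M)$ is the set of names in $M$; substitutions are applied homomorphically. $\Gamma,M$ denotes $\Gamma\cup\{M\}$. The relation $\vdash$ is the least relation between finite sets of messages and messages closed under: (Id) if $M\in\Gamma$ then $\Gamma\vdash M$; (Pub) $\Gamma\vdash K$ implies $\Gamma\vdash\mathrm{pub}(K)$; (P$_L$) $\Gamma,(M,N),M,N\vdash M'$ implies $\Gamma,(M,N)\vdash M'$; (P$_R$) $\Gamma\vdash M$ and $\Gamma\vdash N$ imply $\Gamma\vdash(M,N)$; (S$_L$) $\Gamma,\{M\}_K\vdash K$ and $\Gamma,\{M\}_K,M,K\vdash N$ imply $\Gamma,\{M\}_K\vdash N$; (S$_R$) $\Gamma\vdash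 M$ and $\Gamma\vdash K$ imply $\Gamma\vdash\{M\}_K$; (A$_L$) $\Gamma,\mathrm{aenc}(M,\mathrm{pub}(K))\vdash K$ and $\Gamma,\mathrm{aenc}(M,\mathrm{pub}(K)),M,K\vdash N$ imply $\Gamma,\mathrm{aenc}(M,\mathrm{pub}(K))\vdash N$; (A$_R$) $\Gamma\vdash M$ and $\Gamma\vdash N$ imply $\Gamma\vdash\mathrm{aenc}(M,N)$. *)

theory Defs
  imports Main
begin

datatype (msg_names: 'n) msg =
    Name 'n
  | MPair "'n msg" "'n msg"
  | SEnc "'n msg" "'n msg"
  | AEnc "'n msg" "'n msg"
  | Pub "'n msg"
  for map: map_msg

definition names_set :: "'n msg set \<Rightarrow> 'n set" where
  "names_set \<Gamma> = (\<Union>M\<in>\<Gamma>. msg_names M)"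

definition ren :: "'n list \<Rightarrow> 'n list \<Rightarrow> 'n \<Rightarrow> 'n" where
  "ren xs ys a = (case map_of (zip xs ys) a of Some b \<Rightarrow> b | None \<Rightarrow> a)"

definition subst_set :: "'n list \<Rightarrow> 'n list \<Rightarrow> 'n msg set \<Rightarrow> 'n msg set" where
  "subst_set xs ys \<Gamma> = map_msg (ren xs ys) ` \<Gamma>"

inductive deduce :: "'n msg set \<Rightarrow> 'n msg \<Rightarrow> bool" (infix "\<turnstile>" 50) where
  Id: "finite \<Gamma> \<Longrightarrow> M \<in> \<Gamma> \<Longrightarrow> \<Gamma> \<turnstile> M"
| PubR: "\<Gamma> \<turnstile> K \<Longrightarrow> \<Gamma> \<turnstile> Pub K"
| PL: "insert M (insert N (insert (MPair M N) \<Gamma>)) \<turnstile> M' \<Longrightarrow> insert (MPair M N) \<Gamma> \<turnstile> M'"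
| PR: "\<Gamma> \<turnstile> M \<Longrightarrow> \<Gamma> \<turnstile> N \<Longrightarrow> \<Gamma> \<turnstile> MPair M N"
| SL: "insert (SEnc M K) \<Gamma> \<turnstile> K \<Longrightarrow> insert M (insert K (insert (SEnc M K) \<Gamma>)) \<turnstile> N
       \<Longrightarrow> insert (SEnc M K) \<Gamma> \<turnstile> N"
| SR: "\<Gamma> \<turnstile> M \<Longrightarrow> \<Gamma> \<turnstile> K \<Longrightarrow> \<Gamma> \<turnstile> SEnc M K"
| AL: "insert (AEnc M (Pub K)) \<Gamma> \<turnstile> K \<Longrightarrow> insert M (insert K (insert (AEnc M (Pub K)) \<Gamma>)) \<turnstile> N
       \<Longrightarrow> insert (AEnc M (Pub K)) \<Gamma> \<turnstile> N"
| AR: "\<Gamma> \<turnstile> M \<Longrightarrow> \<Gamma> \<turnstile> N \<Longrightarrow> \<Gamma> \<turnstile> AEnc M N"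

end

theory Submission
  imports Defs
begin

lemma deduce_finite: "\<Gamma> \<turnstile> M \<Longrightarrow> finite \<Gamma>"
  by (induction rule: deduce.induct) auto

lemma deduce_weaken: "\<Gamma> \<turnstile> M \<Longrightarrow> \<Gamma> \<subseteq> \<Delta> \<Longrightarrow> finite \<Delta> \<Longrightarrow> \<Delta> \<turnstile> M"
proof (induction arbitrary: \<Delta> rule: deduce.induct)
  case (Id \<Gamma> M)
  then show ?case by (auto intro: deduce.Id)
next
  case (PubR \<Gamma> K)
  then show ?case by (auto intro: deduce.PubR)
next
  case (PL M N \<Gamma> M')
  have "insert M (insert N (insert (MPair M N) \<Delta>)) \<turnstile> M'"
    using PL.IH(1)[of "insert M (insert N (insert (MPair M N) \<Delta>))"] PL.prems by auto
  then have "insert (MPair M N) \<Delta> \<turnstile> M'" by (rule deduce.PL)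
  moreover have "insert (MPair M N) \<Delta> = \<Delta>" using PL by auto
  ultimately show ?case by simp
next
  case (PR \<Gamma> M N)
  then show ?case by (auto intro: deduce.PR)
next
  case (SL M K \<Gamma> N)
  have "insert (SEnc M K) \<Delta> \<turnstile> K" using SL by auto
  moreover have "insert M (insert K (insert (SEnc M K) \<Delta>)) \<turnstile> N"
    using SL.IH(2)[of "insert M (insert K (insert (SEnc M K) \<Delta>))"] SL.prems by auto
  ultimately have "insert (SEnc M K) \<Delta> \<turnstile> N" by (rule deduce.SL)
  moreover have "insert (SEnc M K) \<Delta> = \<Delta>" using SL by auto
  ultimately show ?case by simp
next
  case (SR \<Gamma> M K)
  then show ?case by (auto intro: deduce.SR)
next
  case (AL M K \<Gamma> N)
  have "insert (AEnc M (Pub K)) \<Delta> \<turnstile> K" using AL by auto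
  moreover have "insert M (insert K (insert (AEnc M (Pub K)) \<Delta>)) \<turnstile> N"
    using AL.IH(2)[of "insert M (insert K (insert (AEnc M (Pub K)) \<Delta>))"] AL.prems by auto
  ultimately have "insert (AEnc M (Pub K)) \<Delta> \<turnstile> N" by (rule deduce.AL)
  moreover have "insert (AEnc M (Pub K)) \<Delta> = \<Delta>" using AL by auto
  ultimately show ?case by simp
next
  case (AR \<Gamma> M N)
  then show ?case by (auto intro: deduce.AR)
qed

lemma deduce_map: "\<Gamma> \<turnstile> M \<Longrightarrow> map_msg f ` \<Gamma> \<turnstile> map_msg f M"
proof (induction rule: deduce.induct)
  case (Id \<Gamma> M)
  then show ?case by (auto intro: deduce.Id)
next
  case (PubR \<Gamma> K)
  then show ?case by (auto intro: deduce.PubR)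
next
  case (PL M N \<Gamma> M')
  from PL.IH show ?case by simp (rule deduce.PL)
next
  case (PR \<Gamma> M N)
  then show ?case by (auto intro: deduce.PR)
next
  case (SL M K \<Gamma> N)
  from SL.IH show ?case by simp (rule deduce.SL; assumption)
next
  case (SR \<Gamma> M K)
  then show ?case by (auto intro: deduce.SR)
next
  case (AL M K \<Gamma> N)
  from AL.IH show ?case by simp (rule deduce.AL; assumption)
next
  case (AR \<Gamma> M N)
  then show ?case by (auto intro: deduce.AR)
qed

lemma map_of_zip_None:
  "length xs = length ys \<Longrightarrow> map_of (zip xs ys) a = None \<longleftrightarrow> a \<notin> set xs"
  by (metis map_fst_zip map_of_eq_None_iff set_map)

lemma ren_inv:
  assumes "length xs = length ys" "distinct xs" "distinct ys" "a \<notin> set ys"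
  shows "ren ys xs (ren xs ys a) = a"
proof (cases "a \<in> set xs")
  case True
  then obtain i where i: "i < length xs" "a = xs ! i" by (auto simp: in_set_conv_nth)
  have "map_of (zip xs ys) a = Some (ys ! i)"
    using i assms map_of_zip_nth[of xs ys i] by simp
  moreover have "map_of (zip ys xs) (ys ! i) = Some (xs ! i)"
    using i assms map_of_zip_nth[of ys xs i] by simp
  ultimately show ?thesis using i by (simp add: ren_def)
next
  case False
  then have "map_of (zip xs ys) a = None" using assms
    by (simp add: map_of_zip_None)
  moreover have "map_of (zip ys xs) a = None" using assms
    by (simp add: map_of_zip_None)
  ultimately show ?thesis by (simp add: ren_def)
qed

theorem lemma3p6:
  fixes xs ys :: "nat list" and \<Gamma> :: "nat msg set" and M :: "nat msg"
  assumes "length xs = length ys"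
    and "distinct xs" and "distinct ys"
    and "finite \<Gamma>"
    and "names_set \<Gamma> \<inter> set ys = {}"
    and "msg_names M \<subseteq> names_set \<Gamma>"
  shows "(\<Gamma> \<union> subst_set xs ys \<Gamma>) \<turnstile> M \<longleftrightarrow> \<Gamma> \<turnstile> M"
proof
  assume "\<Gamma> \<turnstile> M"
  then show "(\<Gamma> \<union> subst_set xs ys \<Gamma>) \<turnstile> M"
    by (rule deduce_weaken) (use assms(4) in \<open>auto simp: subst_set_def\<close>)
next
  assume d: "(\<Gamma> \<union> subst_set xs ys \<Gamma>) \<turnstile> M"
  define f where "f = ren ys xs"
  have idN: "map_msg f N = N" if "msg_names N \<subseteq> names_set \<Gamma>" for N
  proof (intro msg.map_ident_strong)
    fix z assume "z \<in> msg_names N"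
    then have "z \<notin> set ys" using that assms(5) by auto
    then have "map_of (zip ys xs) z = None" using map_of_zip_None[of ys xs] assms(1) by simp
    then show "f z = z" by (simp add: f_def ren_def)
  qed
  have inv: "map_msg f (map_msg (ren xs ys) N) = N" if "msg_names N \<subseteq> names_set \<Gamma>" for N
    unfolding msg.map_comp
    using that assms(1-3,5) ren_inv[of xs ys]
    by (intro msg.map_ident_strong) (auto simp: f_def)
  have "map_msg f ` (\<Gamma> \<union> subst_set xs ys \<Gamma>) = \<Gamma>"
  proof -
    have sub: "msg_names N \<subseteq> names_set \<Gamma>" if "N \<in> \<Gamma>" for N
      using that by (auto simp: names_set_def)
    have "map_msg f ` \<Gamma> = \<Gamma>" using idN sub by (simp add: image_cong)
    moreover have "map_msg f ` subst_set xs ys \<Gamma> = \<Gamma>"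
      unfolding subst_set_def image_image using inv sub by (simp add: image_cong)
    ultimately show ?thesis by (simp add: image_Un)
  qed
  moreover have "map_msg f M = M" using idN assms(6) by simp
  ultimately show "\<Gamma> \<turnstile> M" using deduce_map[OF d, of f] by simp
qed

end
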